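(* Let $(b,c)$ be a weighted graph over $V$ with $n(x)>0$ for all $x\in V$, let $m$ be a measure on $V$, and let $U\subseteq V$ be nonempty. Then for all $u\in D(Q_U)$ $$d_U\Big(1-\sqrt{1-\alpha_{b,c,n}(U)^2}\Big)\|u\|_m^2\le Q_U(u)\le D_U\Big(1+\sqrt{1-\alpha_{b,c,n}(U)^2}\Big)\|u\|_m^2 .$$ If moreover $D_U<\infty$, then for all $u\in D(Q_U)$ $$\Big(D_U-\sqrt{D_U^2-\alpha_{b,c,m}(U)^2}\Big)\|u\|_m^2\le Q_U(u)\le\Big(D_U+\sqrt{D_U^2-\alpha_{b,c,m}(U)^2}\Big)\|u\|_m^2 .$$
   Context: Let $V$ be a countably infinite set. A weighted graph over $V$ is a pair $(b,c)$ of maps $b:V\times V\to[0,\infty)$ and $c:V\to[0,\infty)$ with $b(x,x)=0$, $b(x,y)=b(y,x)$ and $\sum_{y\in V}b(x,y)<\infty$ for all $x,y\in V$. A measure on $V$ is a map $m:V\to(0,\infty)$, and $\|u\|_m^2=\sum_x m(x)u(x)^2$. Define $Q^{\max}(u)=\frac12\sum_{x,y}b(x,y)(u(x)-u(y))^2+\sum_x c(x)u(x)^2$; $Q=Q_{b,c,m}$ is the closure in $\ell^2(V,m)$ of the restriction of $Q^{\max}$ to finitely supported functions. For $U\subseteq V$, $Q_U$ is the closure of the restriction of $Q$ to finitely supported functions with support in $U$ (a form on $\ell^2(U,m)$), and $L_U$ its associated selfadjoint operator. Let $n(x)=\sum_y b(x,y)+c(x)$ (when $n>0$ it is itself a measure),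 $d(x)=n(x)/m(x)$, $d_U=\inf_{x\in U}d(x)$, $D_U=\sup_{x\in U}d(x)$. For finite $W$ let $|\partial W|=\sum_{x\in W,y\notin W}b(x,y)+\sum_{x\in W}c(x)$, and for a measure $\mu$ on $V$ set $\alpha_{b,c,\mu}(U)=\inf\{|\partial W|/\mu(W):\ W\subseteq U\text{ finite, nonempty}\}$, $\mu(W)=\sum_{x\in W}\mu(x)$. *)

theory Defs
  imports "HOL-Analysis.Analysis"
begin

text \<open>Vertex set V is a countably infinite type 'v. Functions on V are 'v => real;
  functions in l2(U,m) are represented as functions on V vanishing outside U.\<close>

definition weighted_graph :: "('v \<Rightarrow> 'v \<Rightarrow> real) \<Rightarrow> ('v \<Rightarrow> real) \<Rightarrow> bool" where
  "weighted_graph b c \<longleftrightarrow>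
     (\<forall>x y. b x y \<ge> 0) \<and> (\<forall>x. c x \<ge> 0) \<and> (\<forall>x. b x x = 0) \<and>
     (\<forall>x y. b x y = b y x) \<and> (\<forall>x. (\<lambda>y. b x y) summable_on UNIV)"

definition measure_on :: "('v \<Rightarrow> real) \<Rightarrow> bool" where
  "measure_on m \<longleftrightarrow> (\<forall>x. m x > 0)"

definition normsq :: "('v \<Rightarrow> real) \<Rightarrow> ('v \<Rightarrow> real) \<Rightarrow> real" where
  "normsq m u = (\<Sum>\<^sub>\<infinity>x. m x * (u x)\<^sup>2)"

definition Qmax :: "('v \<Rightarrow> 'v \<Rightarrow> real) \<Rightarrow> ('v \<Rightarrow> real) \<Rightarrow> ('v \<Rightarrow> real) \<Rightarrow> real" where
  "Qmax b c u = (\<Sum>\<^sub>\<infinity>p. b (fst p) (snd p) * (u (fst p) - u (snd p))\<^sup>2) / 2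
                + (\<Sum>\<^sub>\<infinity>x. c x * (u x)\<^sup>2)"

definition fin_supp_in :: "'v set \<Rightarrow> ('v \<Rightarrow> real) \<Rightarrow> bool" where
  "fin_supp_in U \<phi> \<longleftrightarrow> finite {x. \<phi> x \<noteq> 0} \<and> {x. \<phi> x \<noteq> 0} \<subseteq> U"

definition approx_seq :: "('v \<Rightarrow> 'v \<Rightarrow> real) \<Rightarrow> ('v \<Rightarrow> real) \<Rightarrow> ('v \<Rightarrow> real) \<Rightarrow> 'v set
     \<Rightarrow> ('v \<Rightarrow> real) \<Rightarrow> (nat \<Rightarrow> 'v \<Rightarrow> real) \<Rightarrow> bool" where
  "approx_seq b c m U u \<phi> \<longleftrightarrow>
     (\<forall>k. fin_supp_in U (\<phi> k)) \<and>
     (\<lambda>k. normsq m (\<lambda>x. \<phi> k x - u x)) \<longlonglongrightarrow> 0 \<and>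
     (\<forall>\<epsilon>>0. \<exists>N. \<forall>k\<ge>N. \<forall>l\<ge>N. Qmax b c (\<lambda>x. \<phi> k x - \<phi> l x) < \<epsilon>)"

definition QU_dom :: "('v \<Rightarrow> 'v \<Rightarrow> real) \<Rightarrow> ('v \<Rightarrow> real) \<Rightarrow> ('v \<Rightarrow> real) \<Rightarrow> 'v set
     \<Rightarrow> ('v \<Rightarrow> real) set" where
  "QU_dom b c m U = {u. (\<forall>x. x \<notin> U \<longrightarrow> u x = 0) \<and> (\<lambda>x. m x * (u x)\<^sup>2) summable_on UNIV \<and>
                        (\<exists>\<phi>. approx_seq b c m U u \<phi>)}"

definition QU :: "('v \<Rightarrow> 'v \<Rightarrow> real) \<Rightarrow> ('v \<Rightarrow> real) \<Rightarrow> ('v \<Rightarrow> real) \<Rightarrow> 'v set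
     \<Rightarrow> ('v \<Rightarrow> real) \<Rightarrow> real" where
  "QU b c m U u = lim (\<lambda>k. Qmax b c ((SOME \<phi>. approx_seq b c m U u \<phi>) k))"

definition nmeas :: "('v \<Rightarrow> 'v \<Rightarrow> real) \<Rightarrow> ('v \<Rightarrow> real) \<Rightarrow> 'v \<Rightarrow> real" where
  "nmeas b c x = (\<Sum>\<^sub>\<infinity>y. b x y) + c x"

definition deg :: "('v \<Rightarrow> 'v \<Rightarrow> real) \<Rightarrow> ('v \<Rightarrow> real) \<Rightarrow> ('v \<Rightarrow> real) \<Rightarrow> 'v \<Rightarrow> real" where
  "deg b c m x = nmeas b c x / m x"

definition boundary :: "('v \<Rightarrow> 'v \<Rightarrow> real) \<Rightarrow> ('v \<Rightarrow> real) \<Rightarrow> 'v set \<Rightarrow> real" where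
  "boundary b c W = (\<Sum>x\<in>W. \<Sum>\<^sub>\<infinity>y\<in>- W. b x y) + (\<Sum>x\<in>W. c x)"

definition alpha :: "('v \<Rightarrow> 'v \<Rightarrow> real) \<Rightarrow> ('v \<Rightarrow> real) \<Rightarrow> ('v \<Rightarrow> real) \<Rightarrow> 'v set \<Rightarrow> real" where
  "alpha b c \<mu> U = Inf {boundary b c W / (\<Sum>x\<in>W. \<mu> x) | W. W \<subseteq> U \<and> finite W \<and> W \<noteq> {}}"

end

theory Submission
  imports Defs
begin


lemma wgD:
  assumes "weighted_graph b c"
  shows "\<And>x y. b x y \<ge> 0" "\<And>x. c x \<ge> 0" "\<And>x. b x x = 0" "\<And>x y. b x y = b y x"
    "\<And>x. (\<lambda>y. b x y) summable_on UNIV"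
  using assms unfolding weighted_graph_def by auto

lemma fub:
  fixes f :: "'a \<Rightarrow> 'b \<Rightarrow> real"
  assumes "finite S" "\<And>x y. x\<in>S \<Longrightarrow> y\<in>T \<Longrightarrow> 0 \<le> f x y"
    "\<And>x. x\<in>S \<Longrightarrow> (f x has_sum g x) T"
  shows "((\<lambda>p. f (fst p) (snd p)) has_sum (\<Sum>x\<in>S. g x)) (S \<times> T)"
proof -
  have s: "(\<lambda>p. f (fst p) (snd p)) summable_on Sigma S (\<lambda>_. T)"
    by (rule summable_on_SigmaI[where g=g]) (use assms in auto)
  have "(g has_sum (\<Sum>x\<in>S. g x)) S" using assms(1) by (rule has_sum_finiteI) simp
  from has_sum_SigmaI[of S "\<lambda>p. f (fst p) (snd p)" "\<lambda>_. T" g, OF _ this s] assms(3)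
  show ?thesis by auto
qed

definition rS :: "('v \<Rightarrow> 'v \<Rightarrow> real) \<Rightarrow> 'v set \<Rightarrow> 'v \<Rightarrow> real" where
  "rS b S x = (\<Sum>\<^sub>\<infinity>y\<in>-S. b x y)"

lemma split_row:
  assumes "weighted_graph b c" "finite S"
  shows "(\<Sum>\<^sub>\<infinity>y. b x y) = (\<Sum>y\<in>S. b x y) + rS b S x"
proof -
  have s: "(\<lambda>y. b x y) summable_on UNIV" using wgD(5)[OF assms(1)] .
  have "(\<Sum>\<^sub>\<infinity>y. b x y) = (\<Sum>\<^sub>\<infinity>y\<in>S \<union> -S. b x y)" by simp
  also have "\<dots> = (\<Sum>\<^sub>\<infinity>y\<in>S. b x y) + (\<Sum>\<^sub>\<infinity>y\<in>-S. b x y)"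
    by (rule infsum_Un_disjoint) (use s summable_on_subset_banach in auto)
  finally show ?thesis using assms(2) by (simp add: rS_def)
qed

lemma rS_nonneg: "weighted_graph b c \<Longrightarrow> rS b S x \<ge> 0"
  unfolding rS_def by (rule infsum_nonneg) (use wgD in auto)

lemma rS_has_sum:
  assumes "weighted_graph b c"
  shows "((\<lambda>y. b x y) has_sum rS b S x) (-S)"
  unfolding rS_def using wgD(5)[OF assms] summable_on_subset_banach
  by (metis has_sum_infsum subset_UNIV)

definition Qfin :: "('v \<Rightarrow> 'v \<Rightarrow> real) \<Rightarrow> ('v \<Rightarrow> real) \<Rightarrow> 'v set \<Rightarrow> ('v \<Rightarrow> real) \<Rightarrow> real" where
  "Qfin b c S \<phi> = (\<Sum>x\<in>S. \<Sum>y\<in>S. b x y * (\<phi> x - \<phi> y)\<^sup>2) / 2 + (\<Sum>x\<in>S. (rS b S x + c x) * (\<phi> x)\<^sup>2)"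

lemma pair_has_sum:
  assumes wg: "weighted_graph b c" and fin: "finite S" and supp: "\<And>x. x \<notin> S \<Longrightarrow> \<phi> x = 0"
  shows "((\<lambda>p. b (fst p) (snd p) * (\<phi> (fst p) - \<phi> (snd p))\<^sup>2) has_sum
          ((\<Sum>x\<in>S. \<Sum>y\<in>S. b x y * (\<phi> x - \<phi> y)\<^sup>2) + 2 * (\<Sum>x\<in>S. rS b S x * (\<phi> x)\<^sup>2))) UNIV"
proof -
  note W = wgD[OF wg]
  define F where "F p = b (fst p) (snd p) * (\<phi> (fst p) - \<phi> (snd p))\<^sup>2" for p
  have row: "((\<lambda>y. b x y * (\<phi> x - \<phi> y)\<^sup>2) has_sum ((\<Sum>y\<in>S. b x y * (\<phi> x - \<phi> y)\<^sup>2) + rS b S x * (\<phi> x)\<^sup>2)) (S \<union> -S)" for x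
  proof (rule has_sum_Un_disjoint)
    show "((\<lambda>y. b x y * (\<phi> x - \<phi> y)\<^sup>2) has_sum (\<Sum>y\<in>S. b x y * (\<phi> x - \<phi> y)\<^sup>2)) S"
      using fin by (rule has_sum_finiteI) simp
    have "((\<lambda>y. b x y * (\<phi> x)\<^sup>2) has_sum rS b S x * (\<phi> x)\<^sup>2) (-S)"
      using has_sum_cmult_left[OF rS_has_sum[OF wg, of x S], where c="(\<phi> x)\<^sup>2"] by (simp add: mult.commute)
    then show "((\<lambda>y. b x y * (\<phi> x - \<phi> y)\<^sup>2) has_sum rS b S x * (\<phi> x)\<^sup>2) (-S)"
      by (rule has_sum_cong[THEN iffD1, rotated]) (simp add: supp)
  qed auto
  have h1: "(F has_sum (\<Sum>x\<in>S. (\<Sum>y\<in>S. b x y * (\<phi> x - \<phi> y)\<^sup>2) + rS b S x * (\<phi> x)\<^sup>2)) (S \<times> UNIV)"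
    unfolding F_def
    by (rule fub[OF fin, where f="\<lambda>x y. b x y * (\<phi> x - \<phi> y)\<^sup>2"]) (use W row in auto)
  have h2': "((\<lambda>p. b (fst p) (snd p) * (\<phi> (fst p))\<^sup>2) has_sum (\<Sum>x\<in>S. rS b S x * (\<phi> x)\<^sup>2)) (S \<times> (-S))"
    apply (rule fub[OF fin, where f="\<lambda>x y. b x y * (\<phi> x)\<^sup>2"])
    using W apply simp
    subgoal for x using has_sum_cmult_left[OF rS_has_sum[OF wg, of x S], where c="(\<phi> x)\<^sup>2"] by (simp add: mult.commute)
    done
  have "((\<lambda>(x,y). F (y,x)) has_sum (\<Sum>x\<in>S. rS b S x * (\<phi> x)\<^sup>2)) (S \<times> (-S))"
    by (rule has_sum_cong[THEN iffD1, OF _ h2']) (auto simp: F_def supp W(4))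
  then have h2: "(F has_sum (\<Sum>x\<in>S. rS b S x * (\<phi> x)\<^sup>2)) ((-S) \<times> S)"
    using has_sum_swap by blast
  have h3: "(F has_sum 0) ((-S) \<times> (-S))"
    by (rule has_sum_0) (auto simp: F_def supp)
  have "(F has_sum ((\<Sum>x\<in>S. (\<Sum>y\<in>S. b x y * (\<phi> x - \<phi> y)\<^sup>2) + rS b S x * (\<phi> x)\<^sup>2) + ((\<Sum>x\<in>S. rS b S x * (\<phi> x)\<^sup>2) + 0))) (S \<times> UNIV \<union> ((-S) \<times> S \<union> (-S) \<times> (-S)))"
    by (intro has_sum_Un_disjoint h1 h2 h3) auto
  moreover have "S \<times> UNIV \<union> ((-S) \<times> S \<union> (-S) \<times> (-S)) = UNIV" by auto
  ultimately show ?thesis unfolding F_def by (simp add: sum.distrib add.commute)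
qed

lemma c_has_sum:
  fixes w :: "'v \<Rightarrow> real"
  assumes fin: "finite S" and supp: "\<And>x. x \<notin> S \<Longrightarrow> \<phi> x = 0"
  shows "((\<lambda>x. w x * (\<phi> x)\<^sup>2) has_sum (\<Sum>x\<in>S. w x * (\<phi> x)\<^sup>2)) UNIV"
proof -
  have "((\<lambda>x. w x * (\<phi> x)\<^sup>2) has_sum (\<Sum>x\<in>S. w x * (\<phi> x)\<^sup>2)) S" using fin by (rule has_sum_finiteI) simp
  then show ?thesis by (rule has_sum_cong_neutral[THEN iffD1, rotated -1]) (auto simp: supp)
qed

lemma Qmax_fin:
  assumes wg: "weighted_graph b c" and fin: "finite S" and supp: "\<And>x. x \<notin> S \<Longrightarrow> \<phi> x = 0"
  shows "Qmax b c \<phi> = Qfin b c S \<phi>"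
proof -
  have "Qmax b c \<phi> = ((\<Sum>x\<in>S. \<Sum>y\<in>S. b x y * (\<phi> x - \<phi> y)\<^sup>2) + 2 * (\<Sum>x\<in>S. rS b S x * (\<phi> x)\<^sup>2)) / 2
     + (\<Sum>x\<in>S. c x * (\<phi> x)\<^sup>2)"
    unfolding Qmax_def using infsumI[OF pair_has_sum[OF assms]] infsumI[OF c_has_sum[OF fin supp]] by simp
  then show ?thesis unfolding Qfin_def by (simp add: algebra_simps sum.distrib)
qed




lemma boundary_nonneg: "weighted_graph b c \<Longrightarrow> boundary b c W \<ge> 0"
  unfolding boundary_def using wgD[of b c]
  by (intro add_nonneg_nonneg sum_nonneg infsum_nonneg) auto

lemma boundary_fin:
  assumes wg: "weighted_graph b c" and fin: "finite W"
  shows "boundary b c W = (\<Sum>x\<in>W. nmeas b c x) - (\<Sum>x\<in>W. \<Sum>y\<in>W. b x y)"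
proof -
  have "(\<Sum>x\<in>W. nmeas b c x) = (\<Sum>x\<in>W. (\<Sum>y\<in>W. b x y) + rS b W x + c x)"
    unfolding nmeas_def using split_row[OF wg fin] by simp
  then show ?thesis unfolding boundary_def rS_def by (simp add: sum.distrib)
qed

definition Aset where
  "Aset b c \<mu> U = {boundary b c W / (\<Sum>x\<in>W. \<mu> x) | W. W \<subseteq> U \<and> finite W \<and> W \<noteq> {}}"

lemma alpha_le:
  assumes wg: "weighted_graph b c" and mu: "\<And>x. \<mu> x > 0"
    and W: "W \<subseteq> U" "finite W" "W \<noteq> {}"
  shows "alpha b c \<mu> U * (\<Sum>x\<in>W. \<mu> x) \<le> boundary b c W"
proof -
  have pos: "(\<Sum>x\<in>W. \<mu> x) > 0" using W mu by (intro sum_pos) auto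
  have bdd: "bdd_below (Aset b c \<mu> U)"
    unfolding Aset_def bdd_below_def using boundary_nonneg[OF wg] mu
    by (auto intro!: exI[of _ 0] divide_nonneg_pos sum_pos)
  have "alpha b c \<mu> U \<le> boundary b c W / (\<Sum>x\<in>W. \<mu> x)"
    unfolding alpha_def using cInf_lower[OF _ bdd, of "boundary b c W / (\<Sum>x\<in>W. \<mu> x)"] W
    unfolding Aset_def by blast
  then show ?thesis using pos by (simp add: pos_le_divide_eq)
qed

lemma alpha_nonneg:
  assumes wg: "weighted_graph b c" and mu: "\<And>x. \<mu> x > 0" and U: "U \<noteq> {}"
  shows "alpha b c \<mu> U \<ge> 0"
proof -
  obtain x where "x \<in> U" using U by auto
  then have ne: "Aset b c \<mu> U \<noteq> {}" unfolding Aset_def by (auto intro!: exI[of _ "{x}"])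
  show ?thesis unfolding alpha_def Aset_def[symmetric]
    by (rule cInf_greatest[OF ne]) (auto simp: Aset_def intro!: divide_nonneg_pos sum_pos boundary_nonneg[OF wg] mu)
qed

lemma alpha_le_pt:
  assumes wg: "weighted_graph b c" and mu: "\<And>x. \<mu> x > 0" and x: "x \<in> U"
  shows "alpha b c \<mu> U * \<mu> x \<le> nmeas b c x"
  using alpha_le[OF wg mu, of "{x}" U] x boundary_fin[OF wg, of "{x}"] wgD(3)[OF wg] by simp

lemma sum_if_sub:
  assumes "W \<subseteq> S" "finite S"
  shows "(\<Sum>x\<in>S. if x \<in> W then f x else 0) = (\<Sum>x\<in>W. f x)"
proof -
  have "(\<Sum>x\<in>S. if x \<in> W then f x else 0) = sum f (S \<inter> W)"
    using assms(2) by (simp add: sum.inter_restrict)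
  also have "S \<inter> W = W" using assms(1) by auto
  finally show ?thesis .
qed

lemma coarea:
  assumes wg: "weighted_graph b c" and mu: "\<And>x. \<mu> x > 0"
    and fin: "finite S" and SU: "S \<subseteq> U"
    and gnn: "\<And>x. g x \<ge> 0" and gS: "\<And>x. x \<notin> S \<Longrightarrow> g x = 0"
  shows "alpha b c \<mu> U * (\<Sum>x\<in>S. \<mu> x * g x)
     \<le> (\<Sum>x\<in>S. g x * nmeas b c x) - (\<Sum>x\<in>S. \<Sum>y\<in>S. b x y * min (g x) (g y))"
  using gnn gS
proof (induction "card {x\<in>S. g x \<noteq> 0}" arbitrary: g rule: less_induct)
  case less
  define W where "W = {x\<in>S. g x \<noteq> 0}"
  have finW: "finite W" and WS: "W \<subseteq> S" using fin by (auto simp: W_def)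
  show ?case
  proof (cases "W = {}")
    case True
    then have "\<And>x. x \<in> S \<Longrightarrow> g x = 0" by (auto simp: W_def)
    then show ?thesis by simp
  next
    case False
    define t where "t = Min (g ` W)"
    have tin: "t \<in> g ` W" unfolding t_def using False finW by (intro Min_in) auto
    then obtain x0 where x0: "x0 \<in> W" "g x0 = t" by auto
    have tle: "\<And>x. x \<in> W \<Longrightarrow> t \<le> g x" unfolding t_def using finW by auto
    have tpos: "t \<ge> 0" using less.prems(1) x0 by auto
    define g' where "g' x = (if x \<in> W then g x - t else 0)" for x
    have g'nn: "\<And>x. g' x \<ge> 0" using tle by (auto simp: g'_def)
    have g'S: "\<And>x. x \<notin> S \<Longrightarrow> g' x = 0" using WS by (auto simp: g'_def)
    have sub: "{x\<in>S. g' x \<noteq> 0} \<subseteq> W - {x0}" using x0 by (auto simp: g'_def W_def)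
    have "card {x\<in>S. g' x \<noteq> 0} < card {x\<in>S. g x \<noteq> 0}"
      unfolding W_def[symmetric]
      using psubset_card_mono[OF finW, of "{x\<in>S. g' x \<noteq> 0}"] sub x0 by auto
    note IH = less.hyps[OF this g'nn g'S]
    have gdec: "g x = (if x \<in> W then t else 0) + g' x" for x
      using less.prems(2)[of x] by (auto simp: g'_def W_def)
    have mindec: "min (g x) (g y) = (if x \<in> W \<and> y \<in> W then t else 0) + min (g' x) (g' y)" for x y
      using gdec[of x] gdec[of y] g'nn[of x] g'nn[of y] tle less.prems(1)[of x] less.prems(1)[of y]
      by (auto simp: g'_def)
    have s1: "(\<Sum>x\<in>S. \<mu> x * g x) = t * (\<Sum>x\<in>W. \<mu> x) + (\<Sum>x\<in>S. \<mu> x * g' x)"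
    proof -
      have "(\<Sum>x\<in>S. \<mu> x * g x) = (\<Sum>x\<in>S. (if x \<in> W then t * \<mu> x else 0)) + (\<Sum>x\<in>S. \<mu> x * g' x)"
      proof -
        have "\<And>x. \<mu> x * g x = (if x \<in> W then t * \<mu> x else 0) + \<mu> x * g' x"
          by (subst gdec) (simp add: algebra_simps)
        then show ?thesis by (simp add: sum.distrib)
      qed
      then show ?thesis using sum_if_sub[OF WS fin] by (simp add: sum_distrib_left)
    qed
    have s2: "(\<Sum>x\<in>S. g x * nmeas b c x) = t * (\<Sum>x\<in>W. nmeas b c x) + (\<Sum>x\<in>S. g' x * nmeas b c x)"
    proof -
      have "(\<Sum>x\<in>S. g x * nmeas b c x) = (\<Sum>x\<in>S. (if x \<in> W then t * nmeas b c x else 0)) + (\<Sum>x\<in>S. g' x * nmeas b c x)"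
      proof -
        have "\<And>x. g x * nmeas b c x = (if x \<in> W then t * nmeas b c x else 0) + g' x * nmeas b c x"
          by (subst gdec) (simp add: algebra_simps)
        then show ?thesis by (simp add: sum.distrib)
      qed
      then show ?thesis using sum_if_sub[OF WS fin] by (simp add: sum_distrib_left)
    qed
    have s3: "(\<Sum>x\<in>S. \<Sum>y\<in>S. b x y * min (g x) (g y)) = t * (\<Sum>x\<in>W. \<Sum>y\<in>W. b x y)
       + (\<Sum>x\<in>S. \<Sum>y\<in>S. b x y * min (g' x) (g' y))"
    proof -
      have "(\<Sum>x\<in>S. \<Sum>y\<in>S. b x y * min (g x) (g y)) =
          (\<Sum>x\<in>S. if x \<in> W then (\<Sum>y\<in>S. if y \<in> W then t * b x y else 0) else 0)
          + (\<Sum>x\<in>S. \<Sum>y\<in>S. b x y * min (g' x) (g' y))"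
      proof -
        have "\<And>x y. b x y * min (g x) (g y) = (if x \<in> W then (if y \<in> W then t * b x y else 0) else 0) + b x y * min (g' x) (g' y)"
          by (subst mindec) (simp add: algebra_simps)
        then have "\<And>x. (\<Sum>y\<in>S. b x y * min (g x) (g y)) = (if x \<in> W then (\<Sum>y\<in>S. if y \<in> W then t * b x y else 0) else 0) + (\<Sum>y\<in>S. b x y * min (g' x) (g' y))"
          by (simp add: sum.distrib)
        then show ?thesis by (simp add: sum.distrib)
      qed
      also have "\<dots> = t * (\<Sum>x\<in>W. \<Sum>y\<in>W. b x y)
          + (\<Sum>x\<in>S. \<Sum>y\<in>S. b x y * min (g' x) (g' y))"
        using sum_if_sub[OF WS fin, of "\<lambda>x. \<Sum>y\<in>S. if y \<in> W then t * b x y else 0"]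
          sum_if_sub[OF WS fin, of "\<lambda>y. t * b _ y"] by (simp add: sum_distrib_left)
      finally show ?thesis .
    qed
    have bnd: "alpha b c \<mu> U * (\<Sum>x\<in>W. \<mu> x) \<le> (\<Sum>x\<in>W. nmeas b c x) - (\<Sum>x\<in>W. \<Sum>y\<in>W. b x y)"
      using alpha_le[OF wg mu, of W U] WS SU finW False boundary_fin[OF wg finW] by auto
    have "t * (alpha b c \<mu> U * (\<Sum>x\<in>W. \<mu> x)) \<le> t * ((\<Sum>x\<in>W. nmeas b c x) - (\<Sum>x\<in>W. \<Sum>y\<in>W. b x y))"
      using bnd tpos by (rule mult_left_mono)
    then show ?thesis using IH unfolding s1 s2 s3 by (simp add: algebra_simps)
  qed
qed




lemma amgm_l:
  fixes u v l :: real
  assumes "l > 0"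
  shows "2 * \<bar>u * v\<bar> \<le> l * u\<^sup>2 + v\<^sup>2 / l"
proof -
  have "0 \<le> (l * \<bar>u\<bar> - \<bar>v\<bar>)\<^sup>2" by simp
  also have "(l * \<bar>u\<bar> - \<bar>v\<bar>)\<^sup>2 = l * (l * u\<^sup>2 + v\<^sup>2 / l) - l * (2 * \<bar>u * v\<bar>)"
    using assms by (simp add: power2_eq_square algebra_simps abs_mult)
  finally have "l * (2 * \<bar>u * v\<bar>) \<le> l * (l * u\<^sup>2 + v\<^sup>2 / l)" by simp
  then show ?thesis using assms by simp
qed

lemma RL:
  fixes A B Y :: real
  assumes A: "A \<ge> 0" and B: "B \<ge> 0" and H: "\<And>l. l > 0 \<Longrightarrow> Y \<le> l * A + B / l"
  shows "Y \<le> 2 * sqrt (A * B)"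
proof (cases "A > 0 \<and> B > 0")
  case True
  define l where "l = sqrt B / sqrt A"
  have l: "l > 0" using True by (simp add: l_def)
  have sA: "sqrt A * sqrt A = A" "sqrt B * sqrt B = B" using A B by simp_all
  have "l * A = sqrt A * sqrt B" unfolding l_def using True
    by (metis sA(1) nonzero_divide_eq_eq real_sqrt_gt_0_iff less_irrefl mult.assoc mult.commute times_divide_eq_left)
  moreover have "B / l = sqrt A * sqrt B" unfolding l_def using True sA
    by (simp add: field_simps)
  ultimately show ?thesis using H[OF l] by (simp add: real_sqrt_mult)
next
  case False
  then have AB: "A * B = 0" using A B by auto
  show ?thesis
  proof (rule ccontr)
    assume "\<not> ?thesis"
    then have Y: "Y > 0" using AB by simp
    show False
    proof (cases "A = 0")
      case True
      show False
      proof (cases "B = 0")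
        case True
        with H[of 1] \<open>A = 0\<close> Y show False by simp
      next
        case False
        then have Bp: "B > 0" using B by simp
        have "Y \<le> B / (2 * B / Y)" using H[of "2 * B / Y"] Bp Y \<open>A = 0\<close> by simp
        also have "\<dots> = Y / 2" using Bp by simp
        finally show False using Y by simp
      qed
    next
      case False
      then have Ap: "A > 0" and B0: "B = 0" using A AB by auto
      have "Y \<le> (Y / (2 * A)) * A" using H[of "Y / (2 * A)"] Ap Y B0 by simp
      also have "\<dots> = Y / 2" using Ap by simp
      finally show False using Y by simp
    qed
  qed
qed



lemma sum_swap_sym:
  assumes wg: "weighted_graph b c"
  shows "(\<Sum>x\<in>S. \<Sum>y\<in>S. b x y * f y) = (\<Sum>x\<in>S. \<Sum>y\<in>S. b x y * f x)"
  by (subst sum.swap) (simp add: wgD(4)[OF wg])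

lemma Qfin_facts:
  fixes \<phi> :: "'v \<Rightarrow> real" and b :: "'v \<Rightarrow> 'v \<Rightarrow> real"
  assumes wg: "weighted_graph b c" and fin: "finite S"
  defines "A \<equiv> (\<Sum>x\<in>S. \<Sum>y\<in>S. b x y * (\<phi> x - \<phi> y)\<^sup>2)"
    and "Bp \<equiv> (\<Sum>x\<in>S. \<Sum>y\<in>S. b x y * (\<phi> x + \<phi> y)\<^sup>2)"
    and "B \<equiv> (\<Sum>x\<in>S. \<Sum>y\<in>S. b x y * (\<phi> x)\<^sup>2)"
    and "R \<equiv> (\<Sum>x\<in>S. (rS b S x + c x) * (\<phi> x)\<^sup>2)"
  shows "Qfin b c S \<phi> = A / 2 + R" "(\<Sum>x\<in>S. nmeas b c x * (\<phi> x)\<^sup>2) = B + R"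
    "A + Bp = 4 * B" "A \<ge> 0" "Bp \<ge> 0" "R \<ge> 0"
    "\<And>l. l > 0 \<Longrightarrow> B - (\<Sum>x\<in>S. \<Sum>y\<in>S. b x y * min ((\<phi> x)\<^sup>2) ((\<phi> y)\<^sup>2)) \<le> l * A / 4 + Bp / (4 * l)"
proof -
  note W = wgD[OF wg]
  show "Qfin b c S \<phi> = A / 2 + R" unfolding Qfin_def A_def R_def ..
  have "(\<Sum>x\<in>S. nmeas b c x * (\<phi> x)\<^sup>2) = (\<Sum>x\<in>S. (\<Sum>y\<in>S. b x y * (\<phi> x)\<^sup>2) + (rS b S x + c x) * (\<phi> x)\<^sup>2)"
    unfolding nmeas_def split_row[OF wg fin] by (simp add: algebra_simps sum_distrib_right)
  then show "(\<Sum>x\<in>S. nmeas b c x * (\<phi> x)\<^sup>2) = B + R" unfolding B_def R_def by (simp add: sum.distrib)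
  have By: "(\<Sum>x\<in>S. \<Sum>y\<in>S. b x y * (\<phi> y)\<^sup>2) = B" unfolding B_def by (rule sum_swap_sym[OF wg])
  have "A + Bp = (\<Sum>x\<in>S. \<Sum>y\<in>S. 2 * (b x y * (\<phi> x)\<^sup>2) + 2 * (b x y * (\<phi> y)\<^sup>2))"
    unfolding A_def Bp_def by (simp add: sum.distrib[symmetric] power2_eq_square algebra_simps)
  also have "\<dots> = 2 * B + 2 * (\<Sum>x\<in>S. \<Sum>y\<in>S. b x y * (\<phi> y)\<^sup>2)"
    unfolding B_def by (simp only: sum.distrib sum_distrib_left[symmetric])
  also have "\<dots> = 2 * B + 2 * B" using By by simp
  finally show "A + Bp = 4 * B" by simp
  show "A \<ge> 0" "Bp \<ge> 0" unfolding A_def Bp_def using W by (auto intro!: sum_nonneg)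
  show "R \<ge> 0" unfolding R_def using W rS_nonneg[OF wg] by (auto intro!: sum_nonneg)
  fix l :: real assume l: "l > 0"
  have pt: "b x y * (((\<phi> x)\<^sup>2 + (\<phi> y)\<^sup>2) / 2 - min ((\<phi> x)\<^sup>2) ((\<phi> y)\<^sup>2))
      \<le> l * (b x y * (\<phi> x - \<phi> y)\<^sup>2) / 4 + b x y * (\<phi> x + \<phi> y)\<^sup>2 / (4 * l)" for x y
  proof -
    have e: "((\<phi> x)\<^sup>2 + (\<phi> y)\<^sup>2) / 2 - min ((\<phi> x)\<^sup>2) ((\<phi> y)\<^sup>2) = \<bar>(\<phi> x - \<phi> y) * (\<phi> x + \<phi> y)\<bar> / 2"
    proof -
      have "(\<phi> x - \<phi> y) * (\<phi> x + \<phi> y) = (\<phi> x)\<^sup>2 - (\<phi> y)\<^sup>2" by (simp add: power2_eq_square algebra_simps)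
      then show ?thesis by (auto simp: min_def abs_if)
    qed
    have "\<bar>(\<phi> x - \<phi> y) * (\<phi> x + \<phi> y)\<bar> / 2 \<le> (l * (\<phi> x - \<phi> y)\<^sup>2 + (\<phi> x + \<phi> y)\<^sup>2 / l) / 4"
      using amgm_l[OF l, of "\<phi> x - \<phi> y" "\<phi> x + \<phi> y"] by simp
    then have "b x y * (\<bar>(\<phi> x - \<phi> y) * (\<phi> x + \<phi> y)\<bar> / 2) \<le> b x y * ((l * (\<phi> x - \<phi> y)\<^sup>2 + (\<phi> x + \<phi> y)\<^sup>2 / l) / 4)"
      using W(1) by (rule mult_left_mono)
    then show ?thesis unfolding e by (simp add: algebra_simps)
  qed
  have "B - (\<Sum>x\<in>S. \<Sum>y\<in>S. b x y * min ((\<phi> x)\<^sup>2) ((\<phi> y)\<^sup>2))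
     = (\<Sum>x\<in>S. \<Sum>y\<in>S. b x y * (((\<phi> x)\<^sup>2 + (\<phi> y)\<^sup>2) / 2 - min ((\<phi> x)\<^sup>2) ((\<phi> y)\<^sup>2)))"
  proof -
    have "\<And>x y. b x y * (((\<phi> x)\<^sup>2 + (\<phi> y)\<^sup>2) / 2 - min ((\<phi> x)\<^sup>2) ((\<phi> y)\<^sup>2))
       = (b x y * (\<phi> x)\<^sup>2) / 2 + (b x y * (\<phi> y)\<^sup>2) / 2 - b x y * min ((\<phi> x)\<^sup>2) ((\<phi> y)\<^sup>2)"
      by (simp add: algebra_simps)
    then have "(\<Sum>x\<in>S. \<Sum>y\<in>S. b x y * (((\<phi> x)\<^sup>2 + (\<phi> y)\<^sup>2) / 2 - min ((\<phi> x)\<^sup>2) ((\<phi> y)\<^sup>2)))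
      = B / 2 + (\<Sum>x\<in>S. \<Sum>y\<in>S. b x y * (\<phi> y)\<^sup>2) / 2 - (\<Sum>x\<in>S. \<Sum>y\<in>S. b x y * min ((\<phi> x)\<^sup>2) ((\<phi> y)\<^sup>2))"
      unfolding B_def by (simp only: sum.distrib sum_subtractf sum_divide_distrib)
    then show ?thesis using By by simp
  qed
  also have "\<dots> \<le> (\<Sum>x\<in>S. \<Sum>y\<in>S. l * (b x y * (\<phi> x - \<phi> y)\<^sup>2) / 4 + b x y * (\<phi> x + \<phi> y)\<^sup>2 / (4 * l))"
    by (intro sum_mono pt)
  also have "\<dots> = l * A / 4 + Bp / (4 * l)"
    unfolding A_def Bp_def by (simp only: sum.distrib sum_divide_distrib sum_distrib_left times_divide_eq_right)
  finally show "B - (\<Sum>x\<in>S. \<Sum>y\<in>S. b x y * min ((\<phi> x)\<^sup>2) ((\<phi> y)\<^sup>2)) \<le> l * A / 4 + Bp / (4 * l)" .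
qed




lemma fin_supp_S:
  assumes "fin_supp_in U \<phi>"
  shows "finite {x. \<phi> x \<noteq> 0}" "{x. \<phi> x \<noteq> 0} \<subseteq> U" "\<And>x. x \<notin> {x. \<phi> x \<noteq> 0} \<Longrightarrow> \<phi> x = 0"
  using assms unfolding fin_supp_in_def by auto

lemma core_ineq:
  fixes \<phi> :: "'v \<Rightarrow> real" and b :: "'v \<Rightarrow> 'v \<Rightarrow> real"
  assumes wg: "weighted_graph b c" and mu: "\<And>x. \<mu> x > 0"
    and fin: "finite S" and SU: "S \<subseteq> U" and supp: "\<And>x. x \<notin> S \<Longrightarrow> \<phi> x = 0"
  defines "N \<equiv> (\<Sum>x\<in>S. nmeas b c x * (\<phi> x)\<^sup>2)"
  shows "0 \<le> Qmax b c \<phi>" "Qmax b c \<phi> \<le> 2 * N"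
    "(alpha b c \<mu> U * (\<Sum>x\<in>S. \<mu> x * (\<phi> x)\<^sup>2))\<^sup>2 \<le> Qmax b c \<phi> * (2 * N - Qmax b c \<phi>)"
proof -
  define A where "A = (\<Sum>x\<in>S. \<Sum>y\<in>S. b x y * (\<phi> x - \<phi> y)\<^sup>2)"
  define Bp where "Bp = (\<Sum>x\<in>S. \<Sum>y\<in>S. b x y * (\<phi> x + \<phi> y)\<^sup>2)"
  define B where "B = (\<Sum>x\<in>S. \<Sum>y\<in>S. b x y * (\<phi> x)\<^sup>2)"
  define R where "R = (\<Sum>x\<in>S. (rS b S x + c x) * (\<phi> x)\<^sup>2)"
  define Mn where "Mn = (\<Sum>x\<in>S. \<Sum>y\<in>S. b x y * min ((\<phi> x)\<^sup>2) ((\<phi> y)\<^sup>2))"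
  note F = Qfin_facts[OF wg fin, where \<phi>=\<phi>, folded A_def Bp_def B_def R_def, folded Mn_def]
  have Q: "Qmax b c \<phi> = A / 2 + R" using Qmax_fin[OF wg fin supp] F(1) by simp
  have N: "N = B + R" using F(2) unfolding N_def .
  show Q0: "0 \<le> Qmax b c \<phi>" using Q F by simp
  have N2: "2 * N - Qmax b c \<phi> = Bp / 2 + R" using Q N F(3) by simp
  then show "Qmax b c \<phi> \<le> 2 * N" using F by simp
  have co: "alpha b c \<mu> U * (\<Sum>x\<in>S. \<mu> x * (\<phi> x)\<^sup>2) \<le> N - Mn"
    using coarea[OF wg mu fin SU, of "\<lambda>x. (\<phi> x)\<^sup>2"] supp unfolding N_def Mn_def
    by (simp add: mult.commute)
  have H: "alpha b c \<mu> U * (\<Sum>x\<in>S. \<mu> x * (\<phi> x)\<^sup>2) \<le> l * (Qmax b c \<phi> / 2) + ((2 * N - Qmax b c \<phi>) / 2) / l"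
    if l: "l > 0" for l
  proof -
    have "2 \<le> l + 1 / l" using amgm_l[OF l, of 1 1] by simp
    then have "R * 2 \<le> R * (l + 1 / l)" using F(6) by (rule mult_left_mono)
    then have Rl: "R \<le> l * R / 2 + R / (2 * l)" by (simp add: algebra_simps)
    have "N - Mn = (B - Mn) + R" using N by simp
    also have "\<dots> \<le> (l * A / 4 + Bp / (4 * l)) + (l * R / 2 + R / (2 * l))"
      using F(7)[OF l] Rl by simp
    also have "\<dots> = l * ((A / 2 + R) / 2) + ((Bp / 2 + R) / 2) / l"
      using l by (simp add: field_simps)
    also have "\<dots> = l * (Qmax b c \<phi> / 2) + ((2 * N - Qmax b c \<phi>) / 2) / l"
      using Q N2 by simp
    finally show ?thesis using co by simp
  qed
  have "alpha b c \<mu> U * (\<Sum>x\<in>S. \<mu> x * (\<phi> x)\<^sup>2) \<le> 2 * sqrt ((Qmax b c \<phi> / 2) * ((2 * N - Qmax b c \<phi>) / 2))"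
    by (rule RL) (use Q0 N2 F H in auto)
  also have "\<dots> = sqrt (Qmax b c \<phi> * (2 * N - Qmax b c \<phi>))"
    by (simp add: real_sqrt_divide real_sqrt_mult)
  finally have le: "alpha b c \<mu> U * (\<Sum>x\<in>S. \<mu> x * (\<phi> x)\<^sup>2) \<le> sqrt (Qmax b c \<phi> * (2 * N - Qmax b c \<phi>))" .
  have nn: "0 \<le> alpha b c \<mu> U * (\<Sum>x\<in>S. \<mu> x * (\<phi> x)\<^sup>2)"
  proof (cases "U = {}")
    case True then have "S = {}" using SU by auto
    then show ?thesis by simp
  next
    case False
    then show ?thesis using alpha_nonneg[OF wg mu False] mu
      by (intro mult_nonneg_nonneg sum_nonneg) (auto intro: less_imp_le)
  qed
  have pos: "0 \<le> Qmax b c \<phi> * (2 * N - Qmax b c \<phi>)" using Q0 N2 F by simp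
  show "(alpha b c \<mu> U * (\<Sum>x\<in>S. \<mu> x * (\<phi> x)\<^sup>2))\<^sup>2 \<le> Qmax b c \<phi> * (2 * N - Qmax b c \<phi>)"
    using power_mono[OF le nn, of 2] pos by simp
qed

lemma quad_n:
  fixes Q N a :: real
  assumes "N \<ge> 0" "(a * N)\<^sup>2 \<le> Q * (2 * N - Q)"
  shows "\<bar>Q - N\<bar> \<le> N * sqrt (1 - a\<^sup>2)"
proof -
  have "(Q - N)\<^sup>2 \<le> N\<^sup>2 * (1 - a\<^sup>2)" using assms(2) by (simp add: power2_eq_square algebra_simps)
  then have "sqrt ((Q - N)\<^sup>2) \<le> sqrt (N\<^sup>2 * (1 - a\<^sup>2))" by (rule real_sqrt_le_mono)
  then show ?thesis using assms(1) by (simp add: real_sqrt_mult)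
qed

lemma quad_m:
  fixes Q N M D a :: real
  assumes "M \<ge> 0" "Q \<ge> 0" "N \<le> D * M" "(a * M)\<^sup>2 \<le> Q * (2 * N - Q)"
  shows "\<bar>Q - D * M\<bar> \<le> M * sqrt (D\<^sup>2 - a\<^sup>2)"
proof -
  have "Q * (2 * N - Q) \<le> Q * (2 * (D * M) - Q)" using assms(2,3) by (intro mult_left_mono) auto
  then have "(Q - D * M)\<^sup>2 \<le> M\<^sup>2 * (D\<^sup>2 - a\<^sup>2)" using assms(4) by (simp add: power2_eq_square algebra_simps)
  then have "sqrt ((Q - D * M)\<^sup>2) \<le> sqrt (M\<^sup>2 * (D\<^sup>2 - a\<^sup>2))" by (rule real_sqrt_le_mono)
  then show ?thesis using assms(1) by (simp add: real_sqrt_mult)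
qed




lemma normsq_fin:
  assumes "finite S" "\<And>x. x \<notin> S \<Longrightarrow> \<phi> x = 0"
  shows "normsq m \<phi> = (\<Sum>x\<in>S. m x * (\<phi> x)\<^sup>2)"
  unfolding normsq_def using infsumI[OF c_has_sum[OF assms]] .

lemma deg_facts:
  assumes wg: "weighted_graph b c" and npos: "\<forall>x. nmeas b c x > 0" and m: "measure_on m"
  shows "\<And>x. deg b c m x > 0" "bdd_below (deg b c m ` U)"
    "\<And>x. x \<in> U \<Longrightarrow> Inf (deg b c m ` U) \<le> deg b c m x"
    "\<And>x. x \<in> U \<Longrightarrow> bdd_above (deg b c m ` U) \<Longrightarrow> deg b c m x \<le> Sup (deg b c m ` U)"
proof -
  show dp: "\<And>x. deg b c m x > 0" using npos m unfolding deg_def measure_on_def by simp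
  show bb: "bdd_below (deg b c m ` U)" using dp by (auto intro!: bdd_belowI[of _ 0] less_imp_le)
  show "\<And>x. x \<in> U \<Longrightarrow> Inf (deg b c m ` U) \<le> deg b c m x" using bb by (auto intro: cInf_lower)
  show "\<And>x. x \<in> U \<Longrightarrow> bdd_above (deg b c m ` U) \<Longrightarrow> deg b c m x \<le> Sup (deg b c m ` U)"
    by (auto intro: cSup_upper)
qed

lemma N_vs_M:
  assumes wg: "weighted_graph b c" and npos: "\<forall>x. nmeas b c x > 0" and m: "measure_on m"
    and SU: "S \<subseteq> U"
  shows "Inf (deg b c m ` U) * (\<Sum>x\<in>S. m x * (\<phi> x)\<^sup>2) \<le> (\<Sum>x\<in>S. nmeas b c x * (\<phi> x)\<^sup>2)"
    "bdd_above (deg b c m ` U) \<Longrightarrow> (\<Sum>x\<in>S. nmeas b c x * (\<phi> x)\<^sup>2) \<le> Sup (deg b c m ` U) * (\<Sum>x\<in>S. m x * (\<phi> x)\<^sup>2)"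
proof -
  note D = deg_facts[OF wg npos m]
  have nm: "nmeas b c x = deg b c m x * m x" for x using m unfolding deg_def measure_on_def
    by (metis less_irrefl nonzero_eq_divide_eq)
  show "Inf (deg b c m ` U) * (\<Sum>x\<in>S. m x * (\<phi> x)\<^sup>2) \<le> (\<Sum>x\<in>S. nmeas b c x * (\<phi> x)\<^sup>2)"
    unfolding sum_distrib_left
  proof (intro sum_mono)
    fix x assume "x \<in> S"
    then have "Inf (deg b c m ` U) \<le> deg b c m x" using SU D(3) by auto
    moreover have "0 \<le> m x * (\<phi> x)\<^sup>2" using m unfolding measure_on_def by (simp add: less_imp_le)
    ultimately have "Inf (deg b c m ` U) * (m x * (\<phi> x)\<^sup>2) \<le> deg b c m x * (m x * (\<phi> x)\<^sup>2)" by (rule mult_right_mono)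
    then show "Inf (deg b c m ` U) * (m x * (\<phi> x)\<^sup>2) \<le> nmeas b c x * (\<phi> x)\<^sup>2" by (simp add: nm mult.assoc)
  qed
  assume bd: "bdd_above (deg b c m ` U)"
  show "(\<Sum>x\<in>S. nmeas b c x * (\<phi> x)\<^sup>2) \<le> Sup (deg b c m ` U) * (\<Sum>x\<in>S. m x * (\<phi> x)\<^sup>2)"
    unfolding sum_distrib_left
  proof (intro sum_mono)
    fix x assume "x \<in> S"
    then have "deg b c m x \<le> Sup (deg b c m ` U)" using SU D(4) bd by auto
    moreover have "0 \<le> m x * (\<phi> x)\<^sup>2" using m unfolding measure_on_def by (simp add: less_imp_le)
    ultimately have "deg b c m x * (m x * (\<phi> x)\<^sup>2) \<le> Sup (deg b c m ` U) * (m x * (\<phi> x)\<^sup>2)" by (rule mult_right_mono)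
    then show "nmeas b c x * (\<phi> x)\<^sup>2 \<le> Sup (deg b c m ` U) * (m x * (\<phi> x)\<^sup>2)" by (simp add: nm mult.assoc)
  qed
qed

lemma alpha_n_le1:
  assumes wg: "weighted_graph b c" and npos: "\<forall>x. nmeas b c x > 0" and U: "U \<noteq> {}"
  shows "0 \<le> alpha b c (nmeas b c) U" "alpha b c (nmeas b c) U \<le> 1"
proof -
  show "0 \<le> alpha b c (nmeas b c) U" using alpha_nonneg[OF wg _ U] npos by auto
  obtain x where x: "x \<in> U" using U by auto
  have "alpha b c (nmeas b c) U * nmeas b c x \<le> 1 * nmeas b c x"
    using alpha_le_pt[OF wg _ x, of "nmeas b c"] npos by auto
  moreover have "nmeas b c x > 0" using npos by auto
  ultimately show "alpha b c (nmeas b c) U \<le> 1" by (rule mult_right_le_imp_le)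
qed

lemma alpha_m_leD:
  assumes wg: "weighted_graph b c" and npos: "\<forall>x. nmeas b c x > 0" and m: "measure_on m" and U: "U \<noteq> {}"
    and bd: "bdd_above (deg b c m ` U)"
  shows "0 \<le> alpha b c m U" "alpha b c m U \<le> Sup (deg b c m ` U)"
proof -
  show "0 \<le> alpha b c m U" using alpha_nonneg[OF wg _ U] m unfolding measure_on_def by auto
  obtain x where x: "x \<in> U" using U by auto
  have mx: "m x > 0" using m unfolding measure_on_def by auto
  have "alpha b c m U * m x \<le> nmeas b c x" using alpha_le_pt[OF wg _ x, of m] m unfolding measure_on_def by auto
  then have "alpha b c m U \<le> deg b c m x" unfolding deg_def using mx by (simp add: pos_le_divide_eq)
  also have "\<dots> \<le> Sup (deg b c m ` U)" using deg_facts(4)[OF wg npos m x bd] .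
  finally show "alpha b c m U \<le> Sup (deg b c m ` U)" .
qed




lemma phi_bounds:
  assumes wg: "weighted_graph b c" and npos: "\<forall>x. nmeas b c x > 0" and m: "measure_on m" and U: "U \<noteq> {}"
    and fs: "fin_supp_in U \<phi>"
  defines "s \<equiv> 1 - (alpha b c (nmeas b c) U)\<^sup>2"
  shows "Inf (deg b c m ` U) * (1 - sqrt s) * normsq m \<phi> \<le> Qmax b c \<phi>"
    "bdd_above (deg b c m ` U) \<Longrightarrow> Qmax b c \<phi> \<le> Sup (deg b c m ` U) * ((1 + sqrt s) * normsq m \<phi>)"
    "bdd_above (deg b c m ` U) \<Longrightarrow>
      (Sup (deg b c m ` U) - sqrt ((Sup (deg b c m ` U))\<^sup>2 - (alpha b c m U)\<^sup>2)) * normsq m \<phi> \<le> Qmax b c \<phi>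
      \<and> Qmax b c \<phi> \<le> (Sup (deg b c m ` U) + sqrt ((Sup (deg b c m ` U))\<^sup>2 - (alpha b c m U)\<^sup>2)) * normsq m \<phi>"
proof -
  define S where "S = {x. \<phi> x \<noteq> 0}"
  have fin: "finite S" and SU: "S \<subseteq> U" and supp: "\<And>x. x \<notin> S \<Longrightarrow> \<phi> x = 0"
    using fs unfolding fin_supp_in_def S_def by auto
  define N where "N = (\<Sum>x\<in>S. nmeas b c x * (\<phi> x)\<^sup>2)"
  define M where "M = (\<Sum>x\<in>S. m x * (\<phi> x)\<^sup>2)"
  have M: "normsq m \<phi> = M" unfolding M_def by (rule normsq_fin[OF fin supp])
  have mpos: "\<And>x. m x > 0" using m unfolding measure_on_def by auto
  have M0: "M \<ge> 0" unfolding M_def using mpos by (intro sum_nonneg mult_nonneg_nonneg) (auto simp: less_imp_le)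
  have N0: "N \<ge> 0" unfolding N_def using npos by (intro sum_nonneg mult_nonneg_nonneg) (auto simp: less_imp_le)
  have npos': "\<And>x. nmeas b c x > 0" using npos by auto
  note C1 = core_ineq[where \<mu>="nmeas b c" and \<phi>=\<phi> and S=S and U=U, OF wg npos' fin SU supp, folded N_def]
  note C2 = core_ineq[where \<mu>=m and \<phi>=\<phi> and S=S and U=U, OF wg mpos fin SU supp, folded N_def M_def]
  have Q0: "0 \<le> Qmax b c \<phi>" by (rule C2(1))
  have qn0: "\<bar>Qmax b c \<phi> - N\<bar> \<le> N * sqrt s"
    unfolding s_def by (rule quad_n[OF N0 C1(3)])
  have qn: "N - N * sqrt s \<le> Qmax b c \<phi>" "Qmax b c \<phi> \<le> N + N * sqrt s" using qn0 by (auto simp: abs_le_iff)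
  note A = alpha_n_le1[OF wg npos U]
  have "(alpha b c (nmeas b c) U)\<^sup>2 \<le> 1" using A by (intro power_le_one) auto
  then have s01: "0 \<le> s" "s \<le> 1" unfolding s_def by auto
  have ss: "sqrt s \<le> 1" using s01 by simp
  note NM = N_vs_M[OF wg npos m SU, of \<phi>, folded N_def M_def]
  have "Inf (deg b c m ` U) * (1 - sqrt s) * M = (1 - sqrt s) * (Inf (deg b c m ` U) * M)" by simp
  also have "\<dots> \<le> (1 - sqrt s) * N" using NM(1) ss by (intro mult_left_mono) auto
  also have "\<dots> = N - N * sqrt s" by (simp add: algebra_simps)
  also have "\<dots> \<le> Qmax b c \<phi>" using qn by simp
  finally show "Inf (deg b c m ` U) * (1 - sqrt s) * normsq m \<phi> \<le> Qmax b c \<phi>" unfolding M .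
  assume bd: "bdd_above (deg b c m ` U)"
  define D where "D = Sup (deg b c m ` U)"
  have "Qmax b c \<phi> \<le> N + N * sqrt s" using qn by simp
  also have "\<dots> = (1 + sqrt s) * N" by (simp add: algebra_simps)
  also have "\<dots> \<le> (1 + sqrt s) * (D * M)" using NM(2)[OF bd] s01 unfolding D_def by (intro mult_left_mono) auto
  finally show "Qmax b c \<phi> \<le> Sup (deg b c m ` U) * ((1 + sqrt s) * normsq m \<phi>)" unfolding M D_def by (simp add: mult.commute mult.left_commute)
  have qm: "\<bar>Qmax b c \<phi> - D * M\<bar> \<le> M * sqrt (D\<^sup>2 - (alpha b c m U)\<^sup>2)"
    using quad_m[OF M0 Q0 NM(2)[OF bd] C2(3)] unfolding D_def .
  show "(Sup (deg b c m ` U) - sqrt ((Sup (deg b c m ` U))\<^sup>2 - (alpha b c m U)\<^sup>2)) * normsq m \<phi> \<le> Qmax b c \<phi>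
      \<and> Qmax b c \<phi> \<le> (Sup (deg b c m ` U) + sqrt ((Sup (deg b c m ` U))\<^sup>2 - (alpha b c m U)\<^sup>2)) * normsq m \<phi>"
  proof -
    have "D * M - M * sqrt (D\<^sup>2 - (alpha b c m U)\<^sup>2) \<le> Qmax b c \<phi>" "Qmax b c \<phi> \<le> D * M + M * sqrt (D\<^sup>2 - (alpha b c m U)\<^sup>2)"
      using qm by (auto simp: abs_le_iff)
    moreover have "(D - sqrt (D\<^sup>2 - (alpha b c m U)\<^sup>2)) * M = D * M - M * sqrt (D\<^sup>2 - (alpha b c m U)\<^sup>2)"
      "(D + sqrt (D\<^sup>2 - (alpha b c m U)\<^sup>2)) * M = D * M + M * sqrt (D\<^sup>2 - (alpha b c m U)\<^sup>2)"
      by (simp_all add: algebra_simps)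
    ultimately show ?thesis unfolding M D_def[symmetric] by simp
  qed
qed




lemma sq_pt:
  fixes u v l :: real assumes l: "l > 0"
  shows "(u + v)\<^sup>2 \<le> (1 + l) * u\<^sup>2 + (1 + 1 / l) * v\<^sup>2"
proof -
  have "2 * (u * v) \<le> 2 * \<bar>u * v\<bar>" by simp
  also have "\<dots> \<le> l * u\<^sup>2 + v\<^sup>2 / l" by (rule amgm_l[OF l])
  finally have "2 * (u * v) \<le> l * u\<^sup>2 + v\<^sup>2 / l" .
  then show ?thesis by (simp add: power2_eq_square algebra_simps)
qed

lemma tri_l:
  fixes w f g :: "'a \<Rightarrow> real"
  assumes w: "\<And>x. x \<in> A \<Longrightarrow> w x \<ge> 0"
    and sf: "(\<lambda>x. w x * (f x)\<^sup>2) summable_on A" and sg: "(\<lambda>x. w x * (g x)\<^sup>2) summable_on A"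
  shows "(\<lambda>x. w x * (f x + g x)\<^sup>2) summable_on A"
    "\<And>l. l > 0 \<Longrightarrow> infsum (\<lambda>x. w x * (f x + g x)\<^sup>2) A
        \<le> (1 + l) * infsum (\<lambda>x. w x * (f x)\<^sup>2) A + (1 + 1 / l) * infsum (\<lambda>x. w x * (g x)\<^sup>2) A"
proof -
  have pt: "w x * (f x + g x)\<^sup>2 \<le> (1 + l) * (w x * (f x)\<^sup>2) + (1 + 1 / l) * (w x * (g x)\<^sup>2)"
    if "x \<in> A" "l > 0" for x l
  proof -
    have "w x * (f x + g x)\<^sup>2 \<le> w x * ((1 + l) * (f x)\<^sup>2 + (1 + 1 / l) * (g x)\<^sup>2)"
      using w[OF that(1)] sq_pt[OF that(2)] by (rule mult_left_mono[rotated])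
    then show ?thesis by (simp add: algebra_simps)
  qed
  have sR: "(\<lambda>x. (1 + l) * (w x * (f x)\<^sup>2) + (1 + 1 / l) * (w x * (g x)\<^sup>2)) summable_on A" for l
    by (intro summable_on_add summable_on_cmult_right sf sg)
  show s: "(\<lambda>x. w x * (f x + g x)\<^sup>2) summable_on A"
  proof (rule summable_on_comparison_test[OF sR[of 1]])
    fix x assume x: "x \<in> A"
    show "w x * (f x + g x)\<^sup>2 \<le> (1 + 1) * (w x * (f x)\<^sup>2) + (1 + 1 / 1) * (w x * (g x)\<^sup>2)"
      using pt[OF x, of 1] by simp
    show "0 \<le> w x * (f x + g x)\<^sup>2" using w[OF x] by simp
  qed
  fix l :: real assume l: "l > 0"
  have "infsum (\<lambda>x. w x * (f x + g x)\<^sup>2) A \<le> infsum (\<lambda>x. (1 + l) * (w x * (f x)\<^sup>2) + (1 + 1 / l) * (w x * (g x)\<^sup>2)) A"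
    by (rule infsum_mono[OF s sR]) (use pt l in auto)
  also have "\<dots> = (1 + l) * infsum (\<lambda>x. w x * (f x)\<^sup>2) A + (1 + 1 / l) * infsum (\<lambda>x. w x * (g x)\<^sup>2) A"
    by (subst infsum_add) (auto intro!: summable_on_cmult_right sf sg simp: infsum_cmult_right sf sg)
  finally show "infsum (\<lambda>x. w x * (f x + g x)\<^sup>2) A
        \<le> (1 + l) * infsum (\<lambda>x. w x * (f x)\<^sup>2) A + (1 + 1 / l) * infsum (\<lambda>x. w x * (g x)\<^sup>2) A" .
qed

lemma sq_tri:
  fixes X A B :: real
  assumes A: "A \<ge> 0" and B: "B \<ge> 0" and H: "\<And>l. l > 0 \<Longrightarrow> X \<le> (1 + l) * A + (1 + 1 / l) * B"
  shows "sqrt X \<le> sqrt A + sqrt B"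
proof -
  have "X - A - B \<le> 2 * sqrt (A * B)"
    by (rule RL[OF A B]) (use H in \<open>auto simp: algebra_simps\<close>)
  then have "X \<le> (sqrt A + sqrt B)\<^sup>2" using A B by (simp add: power2_eq_square algebra_simps real_sqrt_mult)
  then have "sqrt X \<le> sqrt ((sqrt A + sqrt B)\<^sup>2)" by (rule real_sqrt_le_mono)
  then show ?thesis using A B by simp
qed

definition fsupp :: "('v \<Rightarrow> real) \<Rightarrow> bool" where "fsupp \<phi> \<longleftrightarrow> finite {x. \<phi> x \<noteq> 0}"

lemma fsupp_add: "fsupp f \<Longrightarrow> fsupp g \<Longrightarrow> fsupp (\<lambda>x. f x + g x)"
  unfolding fsupp_def by (rule finite_subset[of _ "{x. f x \<noteq> 0} \<union> {x. g x \<noteq> 0}"]) auto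

lemma fsupp_diff: "fsupp f \<Longrightarrow> fsupp g \<Longrightarrow> fsupp (\<lambda>x. f x - g x)"
  unfolding fsupp_def by (rule finite_subset[of _ "{x. f x \<noteq> 0} \<union> {x. g x \<noteq> 0}"]) auto

lemma fin_supp_fsupp: "fin_supp_in U \<phi> \<Longrightarrow> fsupp \<phi>"
  unfolding fin_supp_in_def fsupp_def by auto

lemma pair_summable:
  assumes wg: "weighted_graph b c" and fs: "fsupp \<phi>"
  shows "(\<lambda>p. b (fst p) (snd p) * (\<phi> (fst p) - \<phi> (snd p))\<^sup>2) summable_on UNIV"
  using pair_has_sum[OF wg fs[unfolded fsupp_def], of \<phi>] unfolding summable_on_def by auto

lemma c_summable:
  fixes w :: "'v \<Rightarrow> real"
  assumes fs: "fsupp \<phi>"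
  shows "(\<lambda>x. w x * (\<phi> x)\<^sup>2) summable_on UNIV"
  using c_has_sum[OF fs[unfolded fsupp_def], of \<phi> w] unfolding summable_on_def by auto

lemma Qmax_nonneg: "weighted_graph b c \<Longrightarrow> Qmax b c \<phi> \<ge> 0"
  unfolding Qmax_def using wgD[of b c] by (intro add_nonneg_nonneg divide_nonneg_nonneg infsum_nonneg) auto

lemma normsq_nonneg: "measure_on m \<Longrightarrow> normsq m \<phi> \<ge> 0"
  unfolding normsq_def measure_on_def by (intro infsum_nonneg mult_nonneg_nonneg) (auto intro: less_imp_le)

lemma lin_comb:
  fixes P Pa Pb C Ca Cb l :: real
  assumes "P \<le> (1 + l) * Pa + (1 + 1 / l) * Pb" "C \<le> (1 + l) * Ca + (1 + 1 / l) * Cb"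
  shows "P / 2 + C \<le> (1 + l) * (Pa / 2 + Ca) + (1 + 1 / l) * (Pb / 2 + Cb)"
proof -
  define X where "X = (1 + l) * Pa + (1 + 1 / l) * Pb"
  define Y where "Y = (1 + l) * Ca + (1 + 1 / l) * Cb"
  have "(1 + l) * (Pa / 2 + Ca) + (1 + 1 / l) * (Pb / 2 + Cb) = X / 2 + Y"
    unfolding X_def Y_def by (simp add: algebra_simps add_divide_distrib)
  moreover have "P \<le> X" "C \<le> Y" using assms unfolding X_def Y_def by auto
  ultimately show ?thesis by linarith
qed

lemma Qmax_tri:
  assumes wg: "weighted_graph b c" and f: "fsupp \<phi>" and g: "fsupp \<psi>"
  shows "sqrt (Qmax b c (\<lambda>x. \<phi> x + \<psi> x)) \<le> sqrt (Qmax b c \<phi>) + sqrt (Qmax b c \<psi>)"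
proof (rule sq_tri[OF Qmax_nonneg[OF wg] Qmax_nonneg[OF wg]])
  fix l :: real assume l: "l > 0"
  note W = wgD[OF wg]
  have e: "(\<lambda>p. b (fst p) (snd p) * ((\<phi> (fst p) + \<psi> (fst p)) - (\<phi> (snd p) + \<psi> (snd p)))\<^sup>2)
     = (\<lambda>p. b (fst p) (snd p) * ((\<phi> (fst p) - \<phi> (snd p)) + (\<psi> (fst p) - \<psi> (snd p)))\<^sup>2)"
    by (rule ext) (simp add: algebra_simps)
  have T1: "infsum (\<lambda>p. b (fst p) (snd p) * ((\<phi> (fst p) - \<phi> (snd p)) + (\<psi> (fst p) - \<psi> (snd p)))\<^sup>2) UNIV
     \<le> (1 + l) * infsum (\<lambda>p. b (fst p) (snd p) * (\<phi> (fst p) - \<phi> (snd p))\<^sup>2) UNIV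
       + (1 + 1 / l) * infsum (\<lambda>p. b (fst p) (snd p) * (\<psi> (fst p) - \<psi> (snd p))\<^sup>2) UNIV"
    by (rule tri_l(2)[OF _ pair_summable[OF wg f] pair_summable[OF wg g] l]) (use W in auto)
  have T2: "infsum (\<lambda>x. c x * (\<phi> x + \<psi> x)\<^sup>2) UNIV
     \<le> (1 + l) * infsum (\<lambda>x. c x * (\<phi> x)\<^sup>2) UNIV + (1 + 1 / l) * infsum (\<lambda>x. c x * (\<psi> x)\<^sup>2) UNIV"
    by (rule tri_l(2)[OF _ c_summable[OF f] c_summable[OF g] l]) (use W in auto)
  show "Qmax b c (\<lambda>x. \<phi> x + \<psi> x) \<le> (1 + l) * Qmax b c \<phi> + (1 + 1 / l) * Qmax b c \<psi>"
    unfolding Qmax_def e by (rule lin_comb[OF T1 T2])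
qed

lemma Qmax_swap: "Qmax b c (\<lambda>x. f x - g x) = Qmax b c (\<lambda>x. g x - f x)"
proof -
  have "\<And>p. ((f (fst p) - g (fst p)) - (f (snd p) - g (snd p)))\<^sup>2 = ((g (fst p) - f (fst p)) - (g (snd p) - f (snd p)))\<^sup>2"
    by (simp add: power2_eq_square algebra_simps)
  moreover have "\<And>x. (f x - g x)\<^sup>2 = (g x - f x)\<^sup>2" by (simp add: power2_commute)
  ultimately show ?thesis unfolding Qmax_def by simp
qed

lemma normsq_swap: "normsq m (\<lambda>x. f x - g x) = normsq m (\<lambda>x. g x - f x)"
  unfolding normsq_def by (simp add: power2_commute)




lemma approx_fs: "approx_seq b c m U u \<phi> \<Longrightarrow> fsupp (\<phi> k)"
  unfolding approx_seq_def using fin_supp_fsupp by blast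

lemma Qconv:
  assumes wg: "weighted_graph b c" and ap: "approx_seq b c m U u \<phi>"
  shows "convergent (\<lambda>k. Qmax b c (\<phi> k))"
proof -
  define q where "q k = sqrt (Qmax b c (\<phi> k))" for k
  note fs = approx_fs[OF ap]
  have d: "\<bar>q k - q l\<bar> \<le> sqrt (Qmax b c (\<lambda>x. \<phi> k x - \<phi> l x))" for k l
  proof -
    have "sqrt (Qmax b c (\<lambda>x. \<phi> l x + (\<phi> k x - \<phi> l x))) \<le> q l + sqrt (Qmax b c (\<lambda>x. \<phi> k x - \<phi> l x))"
      unfolding q_def by (rule Qmax_tri[OF wg fs fsupp_diff[OF fs fs]])
    then have 1: "q k \<le> q l + sqrt (Qmax b c (\<lambda>x. \<phi> k x - \<phi> l x))" unfolding q_def by simp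
    have "sqrt (Qmax b c (\<lambda>x. \<phi> k x + (\<phi> l x - \<phi> k x))) \<le> q k + sqrt (Qmax b c (\<lambda>x. \<phi> l x - \<phi> k x))"
      unfolding q_def by (rule Qmax_tri[OF wg fs fsupp_diff[OF fs fs]])
    then have 2: "q l \<le> q k + sqrt (Qmax b c (\<lambda>x. \<phi> k x - \<phi> l x))" unfolding q_def
      by (simp add: Qmax_swap[of b c "\<phi> l" "\<phi> k"])
    show ?thesis using 1 2 by linarith
  qed
  have "Cauchy q"
  proof (rule CauchyI)
    fix e :: real assume e: "e > 0"
    then obtain N where N: "\<forall>k\<ge>N. \<forall>l\<ge>N. Qmax b c (\<lambda>x. \<phi> k x - \<phi> l x) < e\<^sup>2"
      using ap unfolding approx_seq_def by (meson zero_less_power)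
    show "\<exists>M. \<forall>m\<ge>M. \<forall>n\<ge>M. norm (q m - q n) < e"
    proof (intro exI allI impI)
      fix k l assume "N \<le> k" "N \<le> l"
      then have "sqrt (Qmax b c (\<lambda>x. \<phi> k x - \<phi> l x)) < sqrt (e\<^sup>2)" using N by (intro real_sqrt_less_mono) auto
      then show "norm (q k - q l) < e" using d[of k l] e by simp
    qed
  qed
  then obtain L where L: "q \<longlonglongrightarrow> L" using Cauchy_convergent_iff convergent_def by blast
  have "(\<lambda>k. (q k)\<^sup>2) \<longlonglongrightarrow> L\<^sup>2" by (intro tendsto_intros L)
  moreover have "(q k)\<^sup>2 = Qmax b c (\<phi> k)" for k unfolding q_def using Qmax_nonneg[OF wg] by simp
  ultimately show ?thesis unfolding convergent_def by auto
qed

lemma Nconv: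
  assumes m: "measure_on m" and ap: "approx_seq b c m U u \<phi>"
    and su: "(\<lambda>x. m x * (u x)\<^sup>2) summable_on UNIV"
  shows "(\<lambda>k. normsq m (\<phi> k)) \<longlonglongrightarrow> normsq m u"
proof -
  note fs = approx_fs[OF ap]
  have w: "\<And>x. x \<in> UNIV \<Longrightarrow> m x \<ge> 0" using m unfolding measure_on_def by (auto intro: less_imp_le)
  have su': "(\<lambda>x. m x * (- u x)\<^sup>2) summable_on UNIV" using su by simp
  have se0: "(\<lambda>x. m x * (\<phi> k x + - u x)\<^sup>2) summable_on UNIV" for k
    by (rule tri_l(1)[OF w c_summable[OF fs] su'])
  have se: "(\<lambda>x. m x * (\<phi> k x - u x)\<^sup>2) summable_on UNIV" for k using se0[of k] by simp
  have se': "(\<lambda>x. m x * (u x - \<phi> k x)\<^sup>2) summable_on UNIV" for k using se[of k] by (simp add: power2_commute)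
  have a: "sqrt (normsq m (\<phi> k)) \<le> sqrt (normsq m u) + sqrt (normsq m (\<lambda>x. \<phi> k x - u x))" for k
  proof -
    have "sqrt (normsq m (\<lambda>x. u x + (\<phi> k x - u x))) \<le> sqrt (normsq m u) + sqrt (normsq m (\<lambda>x. \<phi> k x - u x))"
      unfolding normsq_def
      by (rule sq_tri[OF infsum_nonneg infsum_nonneg]) (use tri_l(2)[OF w su se[of k]] w in auto)
    then show ?thesis by simp
  qed
  have b: "sqrt (normsq m u) \<le> sqrt (normsq m (\<phi> k)) + sqrt (normsq m (\<lambda>x. \<phi> k x - u x))" for k
  proof -
    have "sqrt (normsq m (\<lambda>x. \<phi> k x + (u x - \<phi> k x))) \<le> sqrt (normsq m (\<phi> k)) + sqrt (normsq m (\<lambda>x. u x - \<phi> k x))"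
      unfolding normsq_def
      by (rule sq_tri[OF infsum_nonneg infsum_nonneg]) (use tri_l(2)[OF w c_summable[OF fs[of k]] se'[of k]] w in auto)
    then show ?thesis by (simp add: normsq_swap[of m u])
  qed
  have e0: "(\<lambda>k. normsq m (\<lambda>x. \<phi> k x - u x)) \<longlonglongrightarrow> 0" using ap unfolding approx_seq_def by simp
  have e: "(\<lambda>k. sqrt (normsq m (\<lambda>x. \<phi> k x - u x))) \<longlonglongrightarrow> 0"
    using tendsto_real_sqrt[OF e0] by simp
  have "(\<lambda>k. sqrt (normsq m (\<phi> k)) - sqrt (normsq m u)) \<longlonglongrightarrow> 0"
  proof (rule tendsto_sandwich[of "\<lambda>k. - sqrt (normsq m (\<lambda>x. \<phi> k x - u x))" _ _ "\<lambda>k. sqrt (normsq m (\<lambda>x. \<phi> k x - u x))"])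
    show "\<forall>\<^sub>F k in sequentially. - sqrt (normsq m (\<lambda>x. \<phi> k x - u x)) \<le> sqrt (normsq m (\<phi> k)) - sqrt (normsq m u)"
      using b by (auto intro!: always_eventually simp: algebra_simps)
    show "\<forall>\<^sub>F k in sequentially. sqrt (normsq m (\<phi> k)) - sqrt (normsq m u) \<le> sqrt (normsq m (\<lambda>x. \<phi> k x - u x))"
      using a by (auto intro!: always_eventually simp: algebra_simps)
    show "(\<lambda>k. - sqrt (normsq m (\<lambda>x. \<phi> k x - u x))) \<longlonglongrightarrow> 0" using tendsto_minus[OF e] by simp
  qed (rule e)
  then have "(\<lambda>k. (sqrt (normsq m (\<phi> k)) - sqrt (normsq m u)) + sqrt (normsq m u)) \<longlonglongrightarrow> 0 + sqrt (normsq m u)"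
    by (intro tendsto_intros)
  then have "(\<lambda>k. sqrt (normsq m (\<phi> k))) \<longlonglongrightarrow> sqrt (normsq m u)" by simp
  then have "(\<lambda>k. (sqrt (normsq m (\<phi> k)))\<^sup>2) \<longlonglongrightarrow> (sqrt (normsq m u))\<^sup>2"
    by (rule tendsto_power)
  then show ?thesis by (simp add: normsq_nonneg[OF m])
qed




lemma fin_le_infsum:
  fixes f :: "'a \<Rightarrow> real"
  assumes "f summable_on A" "\<And>x. x \<in> A \<Longrightarrow> f x \<ge> 0" "finite F" "F \<subseteq> A"
  shows "sum f F \<le> infsum f A"
proof -
  have "infsum f F \<le> infsum f A"
    by (rule infsum_mono_neutral) (use assms in auto)
  then show ?thesis using assms(3) by simp
qed

lemma closab:
  assumes wg: "weighted_graph b c" and m: "measure_on m" and ap: "approx_seq b c m U u \<phi>"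
    and u0: "\<And>x. u x = 0"
  shows "(\<lambda>k. Qmax b c (\<phi> k)) \<longlonglongrightarrow> 0"
proof -
  note fs = approx_fs[OF ap]
  note W = wgD[OF wg]
  have mpos: "\<And>x. m x > 0" using m unfolding measure_on_def by auto
  have su: "(\<lambda>x. m x * (u x)\<^sup>2) summable_on UNIV" using u0 by simp
  have nu: "normsq m u = 0" unfolding normsq_def using u0 by simp
  have Nk: "(\<lambda>k. normsq m (\<phi> k)) \<longlonglongrightarrow> 0" using Nconv[OF m ap su] nu by simp
  have pw: "(\<lambda>k. \<phi> k x) \<longlonglongrightarrow> 0" for x
  proof -
    have le: "(\<phi> k x)\<^sup>2 \<le> normsq m (\<phi> k) / m x" for k
    proof -
      have "(\<Sum>y\<in>{x}. m y * (\<phi> k y)\<^sup>2) \<le> normsq m (\<phi> k)"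
        unfolding normsq_def by (rule fin_le_infsum[OF c_summable[OF fs]]) (use mpos in \<open>auto intro!: mult_nonneg_nonneg simp: less_imp_le\<close>)
      then show ?thesis using mpos[of x] by (simp add: pos_le_divide_eq mult.commute)
    qed
    have "(\<lambda>k. normsq m (\<phi> k) / m x) \<longlonglongrightarrow> 0 / m x" using mpos[of x] by (intro tendsto_divide[OF Nk tendsto_const]) simp
    have "(\<lambda>k. (\<phi> k x)\<^sup>2) \<longlonglongrightarrow> 0"
    proof (rule tendsto_sandwich[of "\<lambda>_. 0" _ _ "\<lambda>k. normsq m (\<phi> k) / m x"])
      show "\<forall>\<^sub>F n in sequentially. 0 \<le> (\<phi> n x)\<^sup>2" by simp
      show "\<forall>\<^sub>F n in sequentially. (\<phi> n x)\<^sup>2 \<le> normsq m (\<phi> n) / m x" using le by simp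
      show "(\<lambda>_. 0) \<longlonglongrightarrow> (0::real)" by simp
      show "(\<lambda>k. normsq m (\<phi> k) / m x) \<longlonglongrightarrow> 0" using \<open>(\<lambda>k. normsq m (\<phi> k) / m x) \<longlonglongrightarrow> 0 / m x\<close> by simp
    qed
    then have "(\<lambda>k. sqrt ((\<phi> k x)\<^sup>2)) \<longlonglongrightarrow> sqrt 0" by (rule tendsto_real_sqrt)
    then have "(\<lambda>k. \<bar>\<phi> k x\<bar>) \<longlonglongrightarrow> 0" by simp
    then show ?thesis by (simp add: tendsto_rabs_zero_iff)
  qed
  define P where "P \<psi> p = b (fst p) (snd p) * (\<psi> (fst p) - \<psi> (snd p))\<^sup>2" for \<psi> :: "'a \<Rightarrow> real" and p
  define C where "C \<psi> x = c x * (\<psi> x)\<^sup>2" for \<psi> :: "'a \<Rightarrow> real" and x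
  have Qd: "Qmax b c \<psi> = infsum (P \<psi>) UNIV / 2 + infsum (C \<psi>) UNIV" for \<psi>
    unfolding Qmax_def P_def C_def ..
  have key: "Qmax b c (\<phi> k) \<le> \<epsilon>" if k: "N \<le> k" and N: "\<forall>k\<ge>N. \<forall>l\<ge>N. Qmax b c (\<lambda>x. \<phi> k x - \<phi> l x) < \<epsilon>" for k N \<epsilon>
  proof -
    define S where "S = {x. \<phi> k x \<noteq> 0}"
    have finS: "finite S" using fs[of k] unfolding fsupp_def S_def .
    have suppS: "\<And>x. x \<notin> S \<Longrightarrow> \<phi> k x = 0" unfolding S_def by auto
    have CS: "infsum (C (\<phi> k)) UNIV = (\<Sum>x\<in>S. C (\<phi> k) x)"
      unfolding C_def using infsumI[OF c_has_sum[OF finS suppS]] .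
    have fin_bd: "sum (P (\<phi> k)) F / 2 + (\<Sum>x\<in>S. C (\<phi> k) x) \<le> \<epsilon>" if F: "finite F" for F
    proof -
      define g where "g l = sum (P (\<lambda>x. \<phi> k x - \<phi> l x)) F / 2 + (\<Sum>x\<in>S. C (\<lambda>x. \<phi> k x - \<phi> l x) x)" for l
      have "g \<longlonglongrightarrow> sum (P (\<lambda>x. \<phi> k x - 0)) F / 2 + (\<Sum>x\<in>S. C (\<lambda>x. \<phi> k x - 0) x)"
        unfolding g_def P_def C_def by (intro tendsto_intros pw) simp_all
      then have lim: "g \<longlonglongrightarrow> sum (P (\<phi> k)) F / 2 + (\<Sum>x\<in>S. C (\<phi> k) x)" by simp
      have "g l \<le> \<epsilon>" if l: "l \<ge> N" for l
      proof -
        have fd: "fsupp (\<lambda>x. \<phi> k x - \<phi> l x)" by (rule fsupp_diff[OF fs fs])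
        have "sum (P (\<lambda>x. \<phi> k x - \<phi> l x)) F \<le> infsum (P (\<lambda>x. \<phi> k x - \<phi> l x)) UNIV"
          unfolding P_def by (rule fin_le_infsum[OF pair_summable[OF wg fd]]) (use W F in auto)
        moreover have "(\<Sum>x\<in>S. C (\<lambda>x. \<phi> k x - \<phi> l x) x) \<le> infsum (C (\<lambda>x. \<phi> k x - \<phi> l x)) UNIV"
          unfolding C_def by (rule fin_le_infsum[OF c_summable[OF fd]]) (use W finS in auto)
        moreover have "Qmax b c (\<lambda>x. \<phi> k x - \<phi> l x) < \<epsilon>" using N k l by auto
        ultimately show ?thesis unfolding g_def Qd by linarith
      qed
      then show ?thesis by (intro LIMSEQ_le_const2[OF lim]) auto
    qed
    have "infsum (P (\<phi> k)) UNIV = (SUP F\<in>{F. finite F \<and> F \<subseteq> UNIV}. sum (P (\<phi> k)) F)"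
      unfolding P_def by (rule infsum_nonneg_is_SUPREMUM_real[OF pair_summable[OF wg fs]]) (use W in auto)
    also have "\<dots> \<le> 2 * (\<epsilon> - (\<Sum>x\<in>S. C (\<phi> k) x))"
    proof (rule cSUP_least)
      show "{F. finite F \<and> F \<subseteq> UNIV} \<noteq> {}" by auto
      fix F assume "F \<in> {F. finite F \<and> F \<subseteq> (UNIV :: ('a \<times> 'a) set)}"
      then have "sum (P (\<phi> k)) F / 2 + (\<Sum>x\<in>S. C (\<phi> k) x) \<le> \<epsilon>" using fin_bd by auto
      then show "sum (P (\<phi> k)) F \<le> 2 * (\<epsilon> - (\<Sum>x\<in>S. C (\<phi> k) x))" by (simp add: right_diff_distrib)
    qed
    finally show ?thesis unfolding Qd CS by simp
  qed
  show ?thesis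
  proof (rule LIMSEQ_I)
    fix r :: real assume r: "r > 0"
    then obtain N where N: "\<forall>k\<ge>N. \<forall>l\<ge>N. Qmax b c (\<lambda>x. \<phi> k x - \<phi> l x) < r / 2"
      using ap unfolding approx_seq_def by (meson half_gt_zero)
    show "\<exists>no. \<forall>n\<ge>no. norm (Qmax b c (\<phi> n) - 0) < r"
    proof (intro exI allI impI)
      fix n assume "N \<le> n"
      then have "Qmax b c (\<phi> n) \<le> r / 2" using key N by blast
      then show "norm (Qmax b c (\<phi> n) - 0) < r" using Qmax_nonneg[OF wg] r by simp
    qed
  qed
qed




lemma u_zero:
  assumes m: "measure_on m" and su: "(\<lambda>x. m x * (u x)\<^sup>2) summable_on UNIV" and n0: "normsq m u = 0"
  shows "u x = 0"
proof -
  have mpos: "\<And>x. m x > 0" using m unfolding measure_on_def by auto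
  have "(\<Sum>y\<in>{x}. m y * (u y)\<^sup>2) \<le> normsq m u"
    unfolding normsq_def by (rule fin_le_infsum[OF su]) (use mpos in \<open>auto intro!: mult_nonneg_nonneg simp: less_imp_le\<close>)
  then have "m x * (u x)\<^sup>2 \<le> 0" using n0 by simp
  moreover have "m x * (u x)\<^sup>2 \<ge> 0" using mpos[of x] by (simp add: less_imp_le)
  ultimately have "m x * (u x)\<^sup>2 = 0" by linarith
  then show ?thesis using mpos[of x] by simp
qed

theorem mainTheorem8:
  fixes b :: "'v::countable \<Rightarrow> 'v \<Rightarrow> real" and c m :: "'v \<Rightarrow> real" and U :: "'v set"
  assumes "infinite (UNIV :: 'v set)"
    and "weighted_graph b c"
    and "\<forall>x. nmeas b c x > 0"
    and "measure_on m"
    and "U \<noteq> {}"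
  shows "(\<forall>u \<in> QU_dom b c m U.
            Inf (deg b c m ` U) * (1 - sqrt (1 - (alpha b c (nmeas b c) U)\<^sup>2)) * normsq m u
              \<le> QU b c m U u
          \<and> ereal (QU b c m U u)
              \<le> (SUP x\<in>U. ereal (deg b c m x))
                 * ereal ((1 + sqrt (1 - (alpha b c (nmeas b c) U)\<^sup>2)) * normsq m u))
       \<and> (bdd_above (deg b c m ` U) \<longrightarrow>
          (\<forall>u \<in> QU_dom b c m U.
            (Sup (deg b c m ` U) - sqrt ((Sup (deg b c m ` U))\<^sup>2 - (alpha b c m U)\<^sup>2)) * normsq m u
              \<le> QU b c m U u
          \<and> QU b c m U u
              \<le> (Sup (deg b c m ` U) + sqrt ((Sup (deg b c m ` U))\<^sup>2 - (alpha b c m U)\<^sup>2)) * normsq m u))"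
proof -
  note wg = assms(2) and npos = assms(3) and m = assms(4) and U = assms(5)
  define s where "s = 1 - (alpha b c (nmeas b c) U)\<^sup>2"
  define D where "D = Sup (deg b c m ` U)"
  define T where "T = sqrt (D\<^sup>2 - (alpha b c m U)\<^sup>2)"
  have s0: "s \<ge> 0" unfolding s_def using alpha_n_le1[OF wg npos U]
    by (simp add: abs_le_square_iff power_le_one)
  have main: "(Inf (deg b c m ` U) * (1 - sqrt s) * normsq m u \<le> QU b c m U u
          \<and> ereal (QU b c m U u) \<le> (SUP x\<in>U. ereal (deg b c m x)) * ereal ((1 + sqrt s) * normsq m u))
       \<and> (bdd_above (deg b c m ` U) \<longrightarrow>
            (D - T) * normsq m u \<le> QU b c m U u \<and> QU b c m U u \<le> (D + T) * normsq m u)"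
    if u: "u \<in> QU_dom b c m U" for u
  proof -
    define \<phi> where "\<phi> = (SOME \<phi>. approx_seq b c m U u \<phi>)"
    have ex: "\<exists>\<phi>. approx_seq b c m U u \<phi>" using u unfolding QU_dom_def by auto
    have ap: "approx_seq b c m U u \<phi>" unfolding \<phi>_def by (rule someI_ex[OF ex])
    have su: "(\<lambda>x. m x * (u x)\<^sup>2) summable_on UNIV" using u unfolding QU_dom_def by auto
    have QUe: "QU b c m U u = lim (\<lambda>k. Qmax b c (\<phi> k))" unfolding QU_def \<phi>_def ..
    have Ql: "(\<lambda>k. Qmax b c (\<phi> k)) \<longlonglongrightarrow> QU b c m U u"
      unfolding QUe using Qconv[OF wg ap] by (simp add: convergent_LIMSEQ_iff)
    have Nl: "(\<lambda>k. normsq m (\<phi> k)) \<longlonglongrightarrow> normsq m u" by (rule Nconv[OF m ap su])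
    have fsk: "fin_supp_in U (\<phi> k)" for k using ap unfolding approx_seq_def by auto
    note PB = phi_bounds[OF wg npos m U fsk, folded s_def]
    have lim_le: "K * normsq m u \<le> QU b c m U u" if "\<And>k. K * normsq m (\<phi> k) \<le> Qmax b c (\<phi> k)" for K
      by (rule LIMSEQ_le[OF tendsto_mult_left[OF Nl] Ql]) (use that in auto)
    have lim_ge: "QU b c m U u \<le> K * normsq m u" if "\<And>k. Qmax b c (\<phi> k) \<le> K * normsq m (\<phi> k)" for K
      by (rule LIMSEQ_le[OF Ql tendsto_mult_left[OF Nl]]) (use that in auto)
    have L1: "Inf (deg b c m ` U) * (1 - sqrt s) * normsq m u \<le> QU b c m U u"
      by (rule lim_le) (rule PB(1))
    define E where "E = (SUP x\<in>U. ereal (deg b c m x))"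
    obtain x0 where x0: "x0 \<in> U" using U by auto
    have Ege: "ereal (deg b c m x0) \<le> E" unfolding E_def using x0 by (rule SUP_upper)
    have L2: "ereal (QU b c m U u) \<le> E * ereal ((1 + sqrt s) * normsq m u)"
    proof (cases "bdd_above (deg b c m ` U)")
      case True
      have "E \<le> ereal D" unfolding E_def D_def
        by (rule SUP_least) (use True x0 in \<open>auto intro: cSup_upper\<close>)
      then have "\<bar>E\<bar> \<noteq> \<infinity>" using Ege by auto
      then have ED: "E = ereal D" unfolding E_def D_def using ereal_SUP by metis
      have "QU b c m U u \<le> D * ((1 + sqrt s) * normsq m u)"
        using lim_ge[of "D * (1 + sqrt s)"] PB(2)[OF True] unfolding D_def by (simp add: mult.assoc)
      then show ?thesis unfolding ED by simp
    next
      case False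
      have Einf: "E = \<infinity>"
      proof (rule ccontr)
        assume "E \<noteq> \<infinity>"
        then obtain r where r: "E = ereal r" using Ege by (cases E) auto
        have "deg b c m x \<le> r" if "x \<in> U" for x
        proof -
          have "ereal (deg b c m x) \<le> E" unfolding E_def using that by (rule SUP_upper)
          then show ?thesis using r by simp
        qed
        then have "bdd_above (deg b c m ` U)" by (intro bdd_aboveI[of _ r]) auto
        then show False using False by simp
      qed
      show ?thesis
      proof (cases "normsq m u = 0")
        case True
        have u0: "\<And>x. u x = 0" by (rule u_zero[OF m su True])
        have "(\<lambda>k. Qmax b c (\<phi> k)) \<longlonglongrightarrow> 0" by (rule closab[OF wg m ap u0])
        then have "QU b c m U u = 0" using Ql LIMSEQ_unique by blast
        then show ?thesis using True Einf by (simp add: zero_ereal_def[symmetric])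
      next
        case False
        then have "normsq m u > 0" using normsq_nonneg[OF m, of u] by simp
        moreover have "1 + sqrt s > 0" using s0 by (simp add: add_pos_nonneg)
        ultimately have "(1 + sqrt s) * normsq m u > 0" by simp
        moreover have "\<And>r. r > 0 \<Longrightarrow> \<infinity> * ereal r = \<infinity>" by simp
        ultimately have "\<infinity> * ereal ((1 + sqrt s) * normsq m u) = \<infinity>" by blast
        then show ?thesis unfolding Einf by simp
      qed
    qed
    have L3: "(D - T) * normsq m u \<le> QU b c m U u \<and> QU b c m U u \<le> (D + T) * normsq m u"
      if bd: "bdd_above (deg b c m ` U)"
    proof
      show "(D - T) * normsq m u \<le> QU b c m U u"
        by (rule lim_le) (use PB(3)[OF bd] in \<open>simp add: D_def T_def\<close>)
      show "QU b c m U u \<le> (D + T) * normsq m u"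
        by (rule lim_ge) (use PB(3)[OF bd] in \<open>simp add: D_def T_def\<close>)
    qed
    show ?thesis using L1 L2 L3 unfolding E_def by blast
  qed
  show ?thesis using main unfolding s_def D_def T_def by blast
qed



end
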